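(* Let $X$ be a convex subset of a real vector space, $I:X\to\mathbb{R}$ a convex function and $P:X\to]0,+\infty[$ a concave function. Then, for each $\mu>0$, a point $u\in X$ is a global minimum of the function $x\mapsto I(x)-\mu\log P(x)$ on $X$ if and only if $$I(u)\leq I(x)-\mu\left(\frac{P(x)}{P(u)}-1\right)$$ for all $x\in X$. *)

theory Defs
  imports "HOL-Analysis.Analysis"
begin

end

theory Submission
  imports Defs
begin

theorem theorem1p6:
  fixes X :: "'a::real_vector set" and I P :: "'a \<Rightarrow> real" and \<mu> :: real and u :: 'a
  assumes "convex X"
    and "convex_on X I"
    and "concave_on X P"
    and "\<And>x. x \<in> X \<Longrightarrow> P x > 0"
    and "\<mu> > 0"
    and "u \<in> X"
  shows "(\<forall>x\<in>X. I u - \<mu> * ln (P u) \<le> I x - \<mu> * ln (P x)) \<longleftrightarrow>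
         (\<forall>x\<in>X. I u \<le> I x - \<mu> * (P x / P u - 1))"
proof
  assume H: "\<forall>x\<in>X. I u - \<mu> * ln (P u) \<le> I x - \<mu> * ln (P x)"
  show "\<forall>x\<in>X. I u \<le> I x - \<mu> * (P x / P u - 1)"
  proof
    fix x assume x: "x \<in> X"
    define c where "c = I x - I u"
    define b where "b = P x - P u"
    have Pu: "P u > 0" using assms(4,6) by auto
    have Px: "P x > 0" using assms(4) x by auto
    have key: "c * P u + t * (c * b) \<ge> \<mu> * b" if t: "0 < t" "t \<le> 1" for t
    proof -
      define xt where "xt = (1 - t) *\<^sub>R u + t *\<^sub>R x"
      have xt: "xt \<in> X" using assms(1,6) x t unfolding xt_def
        by (simp add: convex_alt)
      define Q where "Q = (1 - t) * P u + t * P x"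
      have Qeq: "Q = P u + t * b" unfolding Q_def b_def by (simp add: algebra_simps)
      have Qpos: "Q > 0" unfolding Q_def using Pu Px t
        by (smt (verit) mult_pos_pos mult_nonneg_nonneg)
      have Ixt: "I xt \<le> (1 - t) * I u + t * I x"
        using convex_onD[OF assms(2), of t u x] t assms(6) x unfolding xt_def by simp
      have Pxt: "P xt \<ge> Q"
        using convex_onD[OF assms(3)[unfolded concave_on_def], of t u x] t assms(6) x
        unfolding xt_def Q_def by simp
      have lnm: "ln Q \<le> ln (P xt)" using Pxt Qpos by simp
      have l1: "ln (P u / Q) \<le> P u / Q - 1" using Pu Qpos by (intro ln_le_minus_one) simp
      have l2: "ln (P u / Q) = ln (P u) - ln Q" using Pu Qpos by (simp add: ln_div)
      have l3: "P u / Q - 1 = - (t * b) / Q" using Qpos Qeq by (simp add: field_simps)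
      have A: "ln (P xt) - ln (P u) \<ge> t * b / Q" using l1 l2 l3 lnm by simp
      have B: "I u - \<mu> * ln (P u) \<le> I xt - \<mu> * ln (P xt)" using H xt by auto
      have "\<mu> * (t * b / Q) \<le> \<mu> * (ln (P xt) - ln (P u))"
        using A assms(5) by (intro mult_left_mono) auto
      also have "\<dots> \<le> I xt - I u" using B by (simp add: algebra_simps)
      also have "\<dots> \<le> t * c" using Ixt unfolding c_def by (simp add: algebra_simps)
      finally have "\<mu> * (t * b) / Q \<le> t * c" by simp
      hence "\<mu> * (t * b) \<le> t * c * Q" using Qpos by (simp add: divide_le_eq)
      hence "t * (\<mu> * b) \<le> t * (c * Q)" by (simp add: algebra_simps)
      hence "\<mu> * b \<le> c * Q" using t by simp
      thus ?thesis unfolding Qeq by (simp add: algebra_simps)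
    qed
    have "\<mu> * b \<le> c * P u"
    proof (rule ccontr)
      assume nt: "\<not> \<mu> * b \<le> c * P u"
      define d where "d = \<mu> * b - c * P u"
      have d: "d > 0" using nt unfolding d_def by simp
      define t where "t = min 1 (d / (2 * (\<bar>c * b\<bar> + 1)))"
      have t0: "t > 0" unfolding t_def using d by simp
      have t1: "t \<le> 1" unfolding t_def by simp
      have "t * (c * b) \<le> t * \<bar>c * b\<bar>" using t0 by (simp add: mult_left_mono)
      also have "\<dots> \<le> d / (2 * (\<bar>c * b\<bar> + 1)) * \<bar>c * b\<bar>"
        by (rule mult_right_mono) (auto simp: t_def)
      also have "\<dots> < d"
      proof -
        have "d / (2 * (\<bar>c * b\<bar> + 1)) * \<bar>c * b\<bar> = d * (\<bar>c * b\<bar> / (2 * (\<bar>c * b\<bar> + 1)))"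
          by simp
        also have "\<bar>c * b\<bar> / (2 * (\<bar>c * b\<bar> + 1)) < 1"
          by (simp add: divide_less_eq)
        hence "d * (\<bar>c * b\<bar> / (2 * (\<bar>c * b\<bar> + 1))) < d * 1"
          using d by (intro mult_strict_left_mono) auto
        finally show ?thesis by simp
      qed
      finally have "t * (c * b) < d" .
      with key[OF t0 t1] show False unfolding d_def by simp
    qed
    hence "\<mu> * b / P u \<le> c" using Pu by (simp add: divide_le_eq)
    moreover have "\<mu> * (P x / P u - 1) = \<mu> * b / P u" using Pu unfolding b_def
      by (simp add: field_simps)
    ultimately show "I u \<le> I x - \<mu> * (P x / P u - 1)" unfolding c_def by simp
  qed
next
  assume H: "\<forall>x\<in>X. I u \<le> I x - \<mu> * (P x / P u - 1)"
  show "\<forall>x\<in>X. I u - \<mu> * ln (P u) \<le> I x - \<mu> * ln (P x)"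
  proof
    fix x assume x: "x \<in> X"
    have Pu: "P u > 0" using assms(4,6) by auto
    have Px: "P x > 0" using assms(4) x by auto
    have "ln (P x / P u) \<le> P x / P u - 1" using Pu Px by (intro ln_le_minus_one) simp
    hence "ln (P x) - ln (P u) \<le> P x / P u - 1" using Pu Px by (simp add: ln_div)
    hence "\<mu> * (ln (P x) - ln (P u)) \<le> \<mu> * (P x / P u - 1)"
      using assms(5) by (simp add: mult_left_mono)
    with H x show "I u - \<mu> * ln (P u) \<le> I x - \<mu> * ln (P x)"
      by (auto simp: algebra_simps)
  qed
qed

end
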